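(* Let $n\ge1$, let $\{e_1,\dots,e_n\}$ be a basis of a real vector space $X$, let $V=\{0,e_1,\dots,e_n\}$ and let $T=(V,E,0)$ be a tree on $V$ rooted at $0$. Suppose that $a,b\in\mathbb R^n$ and $c\in(\mathbb R\setminus\{0\})^n$ satisfy \[\sum_{i=1}^na_ie_i=\sum_{i=1}^nb_i\frac{e_i-\mathrm{pred}_T(e_i)}{c_i}.\] Then $b_i=c_i\sum_{\{j:\,e_j\in V_{e_i}^T\}}a_j$ for every $i=1,\dots,n$.
   Context: For a tree $T$ on a finite vertex set rooted at $0$ and a vertex $v\ne0$, $\mathrm{pred}_T(v)$ is the neighbour of $v$ on the unique path from $v$ to $0$ (here vertices are vectors, $0$ the zero vector), and $V_v^T$ is the vertex set of the subtree rooted at $v$, i.e. $v$ together with all vertices whose path to $0$ passes through $v$. *)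

theory Defs
  imports "HOL-Analysis.Analysis"
begin

definition is_upath :: "'a set set \<Rightarrow> 'a list \<Rightarrow> bool" where
  "is_upath E xs \<longleftrightarrow> xs \<noteq> [] \<and> distinct xs \<and>
     (\<forall>i. Suc i < length xs \<longrightarrow> {xs ! i, xs ! Suc i} \<in> E)"

definition is_tree :: "'a set \<Rightarrow> 'a set set \<Rightarrow> bool" where
  "is_tree V E \<longleftrightarrow> finite V \<and>
     E \<subseteq> {{u, v} | u v. u \<in> V \<and> v \<in> V \<and> u \<noteq> v} \<and>
     (\<forall>u\<in>V. \<forall>v\<in>V. \<exists>!xs. is_upath E xs \<and> hd xs = u \<and> last xs = v)"

definition tree_path :: "'a set set \<Rightarrow> 'a \<Rightarrow> 'a \<Rightarrow> 'a list" where
  "tree_path E u v = (THE xs. is_upath E xs \<and> hd xs = u \<and> last xs = v)"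

definition tree_pred :: "'a set set \<Rightarrow> 'a::zero \<Rightarrow> 'a" where
  "tree_pred E v = tree_path E v 0 ! 1"

definition subtree_verts :: "'a set \<Rightarrow> 'a set set \<Rightarrow> 'a::zero \<Rightarrow> 'a set" where
  "subtree_verts V E v = {w \<in> V. v \<in> set (tree_path E w 0)}"

end

theory Submission
  imports Defs
begin

lemma tp_props:
  assumes "is_tree V E" "u \<in> V" "v \<in> V"
  shows "is_upath E (tree_path E u v) \<and> hd (tree_path E u v) = u \<and> last (tree_path E u v) = v"
  unfolding tree_path_def
  by (rule theI') (use assms in \<open>auto simp: is_tree_def\<close>)

lemma tp_unique:
  assumes "is_tree V E" "u \<in> V" "v \<in> V" "is_upath E xs" "hd xs = u" "last xs = v"
  shows "tree_path E u v = xs"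
  unfolding tree_path_def
  by (rule the1_equality) (use assms in \<open>auto simp: is_tree_def\<close>)

lemma edge_V:
  assumes "is_tree V E" "{x, y} \<in> E"
  shows "x \<in> V \<and> y \<in> V \<and> x \<noteq> y"
proof -
  from assms obtain u v where "{x,y} = {u,v}" "u \<in> V" "v \<in> V" "u \<noteq> v"
    unfolding is_tree_def by blast
  then show ?thesis by (auto simp: doubleton_eq_iff)
qed

lemma tp_step:
  assumes T: "is_tree V E" and w: "w \<in> V" and z: "(0::'a::zero) \<in> V" and wz: "w \<noteq> 0"
  shows "tree_path E w 0 = w # tree_path E (tree_pred E w) 0 \<and> tree_pred E w \<in> V
         \<and> tree_pred E w \<noteq> w"
proof -
  define xs where "xs = tree_path E w 0"
  have P: "is_upath E xs" "hd xs = w" "last xs = 0"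
    using tp_props[OF T w z] unfolding xs_def by auto
  have ne: "xs \<noteq> []" and dis: "distinct xs" and ed: "\<And>i. Suc i < length xs \<Longrightarrow> {xs ! i, xs ! Suc i} \<in> E"
    using P(1) unfolding is_upath_def by auto
  have len: "length xs \<ge> 2"
  proof (rule ccontr)
    assume "\<not> length xs \<ge> 2"
    with ne have "length xs = 1" by (cases xs) (auto simp: Suc_le_eq)
    then obtain y where "xs = [y]" by (cases xs) auto
    with P wz show False by auto
  qed
  have xs_eq: "xs = w # tl xs" using ne P(2) by (cases xs) auto
  have tl_ne: "tl xs \<noteq> []" using len by (cases xs) auto
  have e01: "{xs ! 0, xs ! 1} \<in> E" using ed[of 0] len by auto
  have x1V: "xs ! 1 \<in> V" using edge_V[OF T e01] by auto
  have x1w: "xs ! 1 \<noteq> w" using edge_V[OF T e01] P(2) ne by (auto simp: hd_conv_nth)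
  have hdtl: "hd (tl xs) = xs ! 1" using tl_ne xs_eq by (metis One_nat_def hd_conv_nth nth_Cons_Suc)
  have up: "is_upath E (tl xs)"
    unfolding is_upath_def
  proof (intro conjI allI impI)
    show "tl xs \<noteq> []" by fact
    show "distinct (tl xs)" using dis by (simp add: distinct_tl)
    fix i assume "Suc i < length (tl xs)"
    then show "{tl xs ! i, tl xs ! Suc i} \<in> E" using ed[of "Suc i"] by (simp add: nth_tl)
  qed
  have lt: "last (tl xs) = 0" using P(3) tl_ne xs_eq by (metis last_ConsR)
  have "tree_path E (xs ! 1) 0 = tl xs"
    by (rule tp_unique[OF T x1V z up hdtl lt])
  moreover have "tree_pred E w = xs ! 1" unfolding tree_pred_def xs_def by simp
  ultimately show ?thesis using xs_eq x1V x1w unfolding xs_def by simp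
qed

lemma tp_zero:
  assumes T: "is_tree V E" and z: "(0::'a::zero) \<in> V"
  shows "tree_path E 0 0 = [0]"
proof -
  define xs where "xs = tree_path E 0 0"
  have P: "is_upath E xs" "hd xs = 0" "last xs = 0"
    using tp_props[OF T z z] unfolding xs_def by auto
  have ne: "xs \<noteq> []" and dis: "distinct xs" using P(1) unfolding is_upath_def by auto
  show ?thesis
  proof (cases xs)
    case Nil with ne show ?thesis by simp
  next
    case (Cons y ys)
    show ?thesis
    proof (cases ys)
      case Nil with Cons P show ?thesis unfolding xs_def by simp
    next
      case (Cons y' ys')
      with \<open>xs = y # ys\<close> P dis have False
        by (metis distinct.simps(2) last_ConsR last_in_set list.distinct(1) list.sel(1))
      then show ?thesis ..
    qed
  qed
qed

theorem lemma2p6: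
  fixes n :: nat and e :: "nat \<Rightarrow> 'a::real_vector" and E :: "'a set set"
    and a b c :: "nat \<Rightarrow> real"
  assumes "n \<ge> 1"
    and "inj_on e {1..n}"
    and "independent (e ` {1..n})"
    and "span (e ` {1..n}) = UNIV"
    and "is_tree (insert 0 (e ` {1..n})) E"
    and "\<forall>i\<in>{1..n}. c i \<noteq> 0"
    and "(\<Sum>i=1..n. a i *\<^sub>R e i) = (\<Sum>i=1..n. b i *\<^sub>R ((1 / c i) *\<^sub>R (e i - tree_pred E (e i))))"
  shows "\<forall>i\<in>{1..n}. b i = c i * (\<Sum>j\<in>{j\<in>{1..n}. e j \<in> subtree_verts (insert 0 (e ` {1..n})) E (e i)}. a j)"
proof -
  define V where "V = insert 0 (e ` {1..n})"
  define I where "I = {1..n}"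
  define P where "P k = tree_pred E (e k)" for k
  define d where "d i = b i / c i" for i
  have T: "is_tree V E" using assms(5) unfolding V_def .
  have z: "0 \<in> V" unfolding V_def by simp
  have inj: "inj_on e I" using assms(2) unfolding I_def .
  have eV: "e k \<in> V" if "k \<in> I" for k using that unfolding V_def I_def by simp
  have enz: "e k \<noteq> 0" if "k \<in> I" for k
  proof
    assume "e k = 0"
    then have "0 \<in> e ` {1..n}" using that unfolding I_def by (metis image_eqI)
    then show False using assms(3) dependent_zero by blast
  qed
  have step: "tree_path E (e k) 0 = e k # tree_path E (P k) 0 \<and> P k \<in> V \<and> P k \<noteq> e k"
    if "k \<in> I" for k using tp_step[OF T eV[OF that] z enz[OF that]] unfolding P_def .
  have eq: "(\<Sum>k\<in>I. a k *\<^sub>R e k) = (\<Sum>k\<in>I. d k *\<^sub>R e k) - (\<Sum>l\<in>I. d l *\<^sub>R P l)"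
  proof -
    have "(\<Sum>k\<in>I. a k *\<^sub>R e k) = (\<Sum>k\<in>I. d k *\<^sub>R (e k - P k))"
      using assms(7) unfolding I_def P_def d_def by (simp add: divide_inverse mult.commute)
    then show ?thesis by (simp add: scaleR_diff_right sum_subtractf)
  qed
  have Pl: "d l *\<^sub>R P l = (\<Sum>k\<in>I. (if P l = e k then d l else 0) *\<^sub>R e k)" if "l \<in> I" for l
  proof (cases "P l = 0")
    case True
    then show ?thesis using enz by (auto intro!: sum.neutral)
  next
    case False
    then obtain j where j: "j \<in> I" "P l = e j" using step[OF \<open>l \<in> I\<close>] unfolding V_def I_def by auto
    have "(\<Sum>k\<in>I. (if P l = e k then d l else 0) *\<^sub>R e k) = (\<Sum>k\<in>I. (if k = j then d l *\<^sub>R e j else 0))"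
      using j inj by (intro sum.cong) (auto simp: inj_on_eq_iff)
    also have "\<dots> = d l *\<^sub>R P l" using j by (simp add: I_def)
    finally show ?thesis by simp
  qed
  define g where "g k = a k - d k + (\<Sum>l\<in>I. if P l = e k then d l else 0)" for k
  have "(\<Sum>k\<in>I. g k *\<^sub>R e k) = (\<Sum>k\<in>I. a k *\<^sub>R e k) - (\<Sum>k\<in>I. d k *\<^sub>R e k)
        + (\<Sum>k\<in>I. (\<Sum>l\<in>I. if P l = e k then d l else 0) *\<^sub>R e k)"
    unfolding g_def by (simp add: scaleR_add_left scaleR_diff_left sum.distrib sum_subtractf)
  also have "(\<Sum>k\<in>I. (\<Sum>l\<in>I. if P l = e k then d l else 0) *\<^sub>R e k)
      = (\<Sum>k\<in>I. \<Sum>l\<in>I. (if P l = e k then d l else 0) *\<^sub>R e k)"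
    by (simp add: scaleR_sum_left)
  also have "\<dots> = (\<Sum>l\<in>I. \<Sum>k\<in>I. (if P l = e k then d l else 0) *\<^sub>R e k)"
    by (rule sum.swap)
  also have "\<dots> = (\<Sum>l\<in>I. d l *\<^sub>R P l)" using Pl by simp
  finally have g0: "(\<Sum>k\<in>I. g k *\<^sub>R e k) = 0" using eq by simp
  have gz: "g k = 0" if "k \<in> I" for k
  proof -
    define u where "u v = g (inv_into I e v)" for v
    have fin: "finite (e ` I)" unfolding I_def by simp
    have "(\<Sum>v\<in>e ` I. u v *\<^sub>R v) = (\<Sum>k\<in>I. g k *\<^sub>R e k)"
      using inj by (simp add: sum.reindex u_def)
    then have "(\<Sum>v\<in>e ` I. u v *\<^sub>R v) = 0" using g0 by simp
    moreover have "independent (e ` I)" using assms(3) unfolding I_def .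
    ultimately have "\<forall>v\<in>e ` I. u v = 0" using fin dependent_finite[of "e ` I"] by metis
    then show ?thesis using that inj unfolding u_def by auto
  qed
  show ?thesis
  proof
    fix i assume iI0: "i \<in> {1..n}"
    then have iI: "i \<in> I" unfolding I_def .
    define S where "S = {j\<in>I. e j \<in> subtree_verts V E (e i)}"
    have memS: "j \<in> S \<longleftrightarrow> j \<in> I \<and> e i \<in> set (tree_path E (e j) 0)" for j
      unfolding S_def subtree_verts_def using eV by auto
    have iS: "i \<in> S" using memS step[OF iI] iI by auto
    have finS: "finite S" unfolding S_def I_def by simp
    have SI: "S \<subseteq> I" unfolding S_def by auto
    have inner: "(\<Sum>j\<in>S. if P l = e j then d l else 0) = (if l \<in> S - {i} then d l else 0)"
      if "l \<in> I" for l
    proof (cases "P l = 0")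
      case True
      have "l \<notin> S - {i}"
      proof
        assume "l \<in> S - {i}"
        then have "e i \<in> set (tree_path E (P l) 0)" using memS step[OF that] inj iI that
          by (auto simp: inj_on_eq_iff)
        then show False using True tp_zero[OF T z] enz[OF iI] by simp
      qed
      then show ?thesis using True enz SI by (auto intro!: sum.neutral)
    next
      case False
      then obtain j where j: "j \<in> I" "P l = e j" using step[OF \<open>l \<in> I\<close>] unfolding V_def I_def by auto
      have "(\<Sum>k\<in>S. if P l = e k then d l else 0) = (\<Sum>k\<in>S. if k = j then d l else 0)"
        using j inj SI by (intro sum.cong) (auto simp: inj_on_eq_iff)
      also have "\<dots> = (if j \<in> S then d l else 0)" using finS by simp
      also have "j \<in> S \<longleftrightarrow> l \<in> S - {i}"
      proof -
        have "j \<in> S \<longleftrightarrow> e i \<in> set (tree_path E (P l) 0)" using memS j by simp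
        also have "\<dots> \<longleftrightarrow> l \<in> S - {i}"
        proof (cases "l = i")
          case True
          have "distinct (tree_path E (e l) 0)"
            using tp_props[OF T eV[OF that] z] unfolding is_upath_def by auto
          then show ?thesis using True step[OF that] by auto
        next
          case False
          have "e i \<noteq> e l" using False inj iI that by (auto simp: inj_on_eq_iff)
          then show ?thesis using False memS step[OF that] that by auto
        qed
        finally show ?thesis .
      qed
      finally show ?thesis .
    qed
    have "(\<Sum>j\<in>S. a j) = (\<Sum>j\<in>S. d j - (\<Sum>l\<in>I. if P l = e j then d l else 0))"
    proof (intro sum.cong refl)
      fix j assume "j \<in> S"
      then have "g j = 0" using gz SI by auto
      then show "a j = d j - (\<Sum>l\<in>I. if P l = e j then d l else 0)" unfolding g_def by linarith
    qed
    also have "\<dots> = (\<Sum>j\<in>S. d j) - (\<Sum>j\<in>S. \<Sum>l\<in>I. if P l = e j then d l else 0)"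
      by (rule sum_subtractf)
    also have "(\<Sum>j\<in>S. \<Sum>l\<in>I. if P l = e j then d l else 0) = (\<Sum>l\<in>I. \<Sum>j\<in>S. if P l = e j then d l else 0)"
      by (rule sum.swap)
    also have "\<dots> = (\<Sum>l\<in>I. if l \<in> S - {i} then d l else 0)" using inner by simp
    also have "\<dots> = (\<Sum>l\<in>S - {i}. d l)"
    proof -
      have "(\<Sum>l\<in>I. if l \<in> S - {i} then d l else 0) = sum d (I \<inter> (S - {i}))"
        by (simp add: sum.inter_restrict I_def)
      moreover have "I \<inter> (S - {i}) = S - {i}" using SI by auto
      ultimately show ?thesis by simp
    qed
    also have "(\<Sum>j\<in>S. d j) = d i + (\<Sum>l\<in>S - {i}. d l)"
      using finS iS by (simp add: sum.remove)
    finally have "(\<Sum>j\<in>S. a j) = d i" by simp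
    moreover have "c i \<noteq> 0" using assms(6) iI0 by auto
    ultimately show "b i = c i * (\<Sum>j\<in>{j\<in>{1..n}. e j \<in> subtree_verts (insert 0 (e ` {1..n})) E (e i)}. a j)"
      unfolding S_def I_def V_def d_def by simp
  qed
qed

end
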